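(* There exists a real Banach space $Y$ such that for every $\varepsilon>0$ there exists an $\varepsilon$-convex set $A$ contained in the closed unit ball of $Y$ with $\mathcal{H}(A,\operatorname{Co}(A))=2$.
   Context: For $\varepsilon>0$, a set $A$ is $\varepsilon$-convex if $d(ta+(1-t)b,A)\le\varepsilon$ for all $a,b\in A$ and $t\in[0,1]$, where $d(x,A)=\inf_{a\in A}\|x-a\|$. $\mathcal{H}$ is the Hausdorff distance and $\operatorname{Co}$ the convex hull. *)

theory Defs
  imports "HOL-Analysis.Analysis"
begin

definition eps_convex :: "real \<Rightarrow> 'a::real_normed_vector set \<Rightarrow> bool" where
  "eps_convex eps A \<longleftrightarrow>
     (\<forall>a\<in>A. \<forall>b\<in>A. \<forall>t\<in>{0..1::real}. infdist (t *\<^sub>R a + (1 - t) *\<^sub>R b) A \<le> eps)"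

definition hausdorff_dist :: "'a::metric_space set \<Rightarrow> 'a set \<Rightarrow> ereal" where
  "hausdorff_dist A B =
     max (SUP a\<in>A. ereal (infdist a B)) (SUP b\<in>B. ereal (infdist b A))"

end

theory Submission
  imports Defs "HOL-Library.Countable"
begin

lemma ln_ge_1m: "0 < (x::real) \<Longrightarrow> 1 - 1/x \<le> ln x"
proof -
  assume x: "0 < x"
  have "ln (1/x) \<le> 1/x - 1" using x by (intro ln_le_minus_one) simp
  thus ?thesis using x by (simp add: ln_div)
qed

lemma xlnx_ge: "0 \<le> (x::real) \<Longrightarrow> x - 1 \<le> x * ln x"
proof (cases "x = 0")
  case False
  assume "0 \<le> x" with False have x: "0 < x" by simp
  have "x * (1 - 1/x) \<le> x * ln x" using ln_ge_1m[OF x] x by (intro mult_left_mono) auto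
  thus ?thesis using x by (simp add: algebra_simps)
qed simp

lemma ln2_ge: "1/2 \<le> ln (2::real)"
  using ln_ge_1m[of 2] by simp

lemma coord_upper:
  fixes a b t :: real
  assumes a: "0 < a" and b: "0 < b" and t: "0 \<le> t" "t \<le> 1"
  shows "(t*a + (1-t)*b) * ln (t*a + (1-t)*b) \<le> t*(a * ln a) + (1-t)*(b * ln b)"
proof -
  define c where "c = t*a + (1-t)*b"
  have c: "0 < c" unfolding c_def using a b t
    by (cases "t = 0") (auto intro: add_pos_nonneg add_nonneg_pos)
  have 1: "t*a*(1 - c/a) \<le> t*a*ln (a/c)"
    using ln_ge_1m[of "a/c"] a c t by (intro mult_left_mono) (auto simp: field_simps)
  have 2: "(1-t)*b*(1 - c/b) \<le> (1-t)*b*ln (b/c)"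
    using ln_ge_1m[of "b/c"] b c t by (intro mult_left_mono) (auto simp: field_simps)
  have 3: "t*a*(1 - c/a) + (1-t)*b*(1 - c/b) = 0"
    using a b unfolding c_def by (simp add: field_simps)
  have "t*a*ln (a/c) + (1-t)*b*ln (b/c) = t*(a * ln a) + (1-t)*(b * ln b) - c * ln c"
    using a b c unfolding c_def by (simp add: ln_div algebra_simps)
  with 1 2 3 show ?thesis unfolding c_def by linarith
qed

lemma coord_lower:
  fixes a b t :: real
  assumes a: "0 < a" and b: "0 < b" and t: "0 \<le> t" "t \<le> 1"
  shows "t*(a * ln a) + (1-t)*(b * ln b) - (1-t)*a - t*b \<le> (t*a + (1-t)*b) * ln (t*a + (1-t)*b)"
proof (cases "t = 0 \<or> t = 1")
  case True
  then show ?thesis using a b by auto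
next
  case False
  with t have t0: "0 < t" and t1: "t < 1" by auto
  define c where "c = t*a + (1-t)*b"
  have ca: "t*a \<le> c" and cb: "(1-t)*b \<le> c" unfolding c_def using a b t by auto
  have pa: "0 < t*a" and pb: "0 < (1-t)*b" using a b t0 t1 by auto
  have "c * ln c = t*a*ln c + (1-t)*b*ln c" unfolding c_def by (simp add: algebra_simps)
  also have "\<dots> \<ge> t*a*ln (t*a) + (1-t)*b*ln ((1-t)*b)"
    using pa pb ca cb by (intro add_mono mult_left_mono) auto
  finally have 1: "t*a*ln (t*a) + (1-t)*b*ln ((1-t)*b) \<le> c * ln c" .
  have e1: "t*a*ln (t*a) = t*(a*ln a) + a*(t * ln t)" using a t0 by (simp add: ln_mult algebra_simps)
  have "ln ((1-t)*b) = ln (1-t) + ln b" using b t1 by (intro ln_mult_pos) auto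
  hence e2: "(1-t)*b*ln ((1-t)*b) = (1-t)*(b*ln b) + b*((1-t) * ln (1-t))" by (simp add: algebra_simps)
  have "a*(t - 1) \<le> a*(t * ln t)" using xlnx_ge[of t] a t0 by (intro mult_left_mono) auto
  moreover have "b*((1-t) - 1) \<le> b*((1-t) * ln (1-t))" using xlnx_ge[of "1-t"] b t1 by (intro mult_left_mono) auto
  ultimately show ?thesis using 1 e1 e2 unfolding c_def by (simp add: algebra_simps)
qed


definition NN :: "nat \<Rightarrow> nat" where "NN m = 2^(m*m)"
definition dl :: "nat \<Rightarrow> real" where "dl m = 1 / 2^(m*m+m)"
definition LL :: "nat \<Rightarrow> real" where "LL m = real (m*m+m) * ln 2"
definition kap :: "nat \<Rightarrow> real" where "kap m = 2 / LL m"
definition Lam :: "nat \<Rightarrow> (nat \<Rightarrow> real) set" where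
  "Lam m = {l. (\<forall>j<NN m. 2 * dl m \<le> l j) \<and> (\<Sum>j<NN m. l j) = 1}"
definition valid :: "nat \<Rightarrow> rat list \<Rightarrow> bool" where
  "valid m r \<longleftrightarrow> length r = NN m \<and> (\<forall>j<NN m. dl m \<le> of_rat (r!j)) \<and> (\<Sum>j<NN m. (of_rat (r!j)::real)) \<le> 1"
definition ent :: "nat \<Rightarrow> (nat \<Rightarrow> real) \<Rightarrow> real" where
  "ent m l = (\<Sum>j<NN m. l j * ln (l j))"
definition crs :: "nat \<Rightarrow> (nat \<Rightarrow> real) \<Rightarrow> rat list \<Rightarrow> real" where
  "crs m l r = (\<Sum>j<NN m. l j * ln (of_rat (r!j)))"
definition KL :: "nat \<Rightarrow> (nat \<Rightarrow> real) \<Rightarrow> rat list \<Rightarrow> real" where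
  "KL m l r = ent m l - crs m l r"

lemma NN_pos: "0 < NN m" by (simp add: NN_def)
lemma dl_pos: "0 < dl m" by (simp add: dl_def)
lemma LL_ln: "ln (dl m) = - LL m"
  by (simp add: dl_def LL_def ln_div ln_realpow)
lemma LL_pos: "1 \<le> m \<Longrightarrow> 1 \<le> LL m"
proof -
  assume m: "1 \<le> m"
  have "(2::real) \<le> real (m*m+m)" using m
    by (metis le_add2 mult_le_mono nat_mult_1 of_nat_le_iff of_nat_numeral one_add_one add_le_mono)
  then have "2 * (1/2) \<le> real (m*m+m) * ln 2" using ln2_ge by (intro mult_mono) auto
  thus ?thesis by (simp add: LL_def)
qed
lemma NNdl: "real (NN m) * dl m = 1 / 2^m"
  by (simp add: NN_def dl_def power_add)

lemma Lam_pos: "l \<in> Lam m \<Longrightarrow> j < NN m \<Longrightarrow> 0 < l j"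
  unfolding Lam_def using dl_pos[of m] by force

lemma Lam_le1: "l \<in> Lam m \<Longrightarrow> j < NN m \<Longrightarrow> l j \<le> 1"
proof -
  assume l: "l \<in> Lam m" and j: "j < NN m"
  have "l j \<le> (\<Sum>i<NN m. l i)"
    using j Lam_pos[OF l] by (intro member_le_sum) (auto intro: less_imp_le)
  thus ?thesis using l by (simp add: Lam_def)
qed

lemma valid_pos: "valid m r \<Longrightarrow> j < NN m \<Longrightarrow> 0 < (of_rat (r!j)::real)"
proof -
  assume "valid m r" "j < NN m"
  hence "dl m \<le> of_rat (r!j)" by (simp add: valid_def)
  thus ?thesis using dl_pos[of m] by linarith
qed

lemma KL_nonneg:
  assumes l: "l \<in> Lam m" and r: "valid m r"
  shows "0 \<le> KL m l r"
proof -
  have "(\<Sum>j<NN m. l j - of_rat (r!j)) \<le> (\<Sum>j<NN m. l j * (ln (l j) - ln (of_rat (r!j))))"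
  proof (intro sum_mono)
    fix j assume "j \<in> {..<NN m}"
    hence j: "j < NN m" by simp
    have p: "0 < l j" "0 < (of_rat (r!j)::real)" using Lam_pos[OF l j] valid_pos[OF r j] by auto
    have "l j * (1 - 1/(l j / of_rat (r!j))) \<le> l j * ln (l j / of_rat (r!j))"
      using ln_ge_1m[of "l j / of_rat (r!j)"] p by (intro mult_left_mono) auto
    moreover have "l j * (1 - 1/(l j / of_rat (r!j))) = l j - of_rat (r!j)" using p by (simp add: field_simps)
    moreover have "ln (l j / of_rat (r!j)) = ln (l j) - ln (of_rat (r!j))" using p by (simp add: ln_div)
    ultimately show "l j - of_rat (r!j) \<le> l j * (ln (l j) - ln (of_rat (r!j)))"
      by simp
  qed
  moreover have "(\<Sum>j<NN m. l j - of_rat (r!j)) \<ge> 0"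
    using l r by (simp add: sum_subtractf Lam_def valid_def)
  ultimately show ?thesis
    by (simp add: KL_def ent_def crs_def sum_subtractf[symmetric] algebra_simps)
qed

lemma KL_le:
  assumes l: "l \<in> Lam m" and r: "valid m r"
  shows "KL m l r \<le> LL m"
proof -
  have "ent m l \<le> 0" unfolding ent_def
    using Lam_pos[OF l] Lam_le1[OF l] by (intro sum_nonpos) (simp add: mult_nonneg_nonpos less_imp_le)
  moreover have "- crs m l r \<le> (\<Sum>j<NN m. l j * LL m)"
    unfolding crs_def sum_negf[symmetric]
  proof (intro sum_mono)
    fix j assume "j \<in> {..<NN m}"
    hence j: "j < NN m" by simp
    have "dl m \<le> of_rat (r!j)" using r j by (simp add: valid_def)
    hence "ln (dl m) \<le> ln (of_rat (r!j))" using dl_pos[of m] by (rule ln_mono)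
    hence "- ln (of_rat (r!j)) \<le> LL m" using LL_ln[of m] by simp
    thus "- (l j * ln (of_rat (r!j))) \<le> l j * LL m"
      using mult_left_mono[of "- ln (of_rat (r!j))" "LL m" "l j"] Lam_pos[OF l j] by simp
  qed
  moreover have "(\<Sum>j<NN m. l j * LL m) = LL m" using l by (simp add: Lam_def sum_distrib_right[symmetric])
  ultimately show ?thesis by (simp add: KL_def)
qed


definition mixf :: "real \<Rightarrow> (nat \<Rightarrow> real) \<Rightarrow> (nat \<Rightarrow> real) \<Rightarrow> nat \<Rightarrow> real" where
  "mixf t l l' = (\<lambda>j. t * l j + (1-t) * l' j)"

lemma mix_Lam:
  assumes l: "l \<in> Lam m" and l': "l' \<in> Lam m" and t: "0 \<le> t" "t \<le> 1"
  shows "mixf t l l' \<in> Lam m"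
proof -
  have "\<forall>j<NN m. 2 * dl m \<le> mixf t l l' j"
  proof (intro allI impI)
    fix j assume j: "j < NN m"
    have "t * (2 * dl m) \<le> t * l j" using l j t by (intro mult_left_mono) (auto simp: Lam_def)
    moreover have "(1-t) * (2 * dl m) \<le> (1-t) * l' j" using l' j t by (intro mult_left_mono) (auto simp: Lam_def)
    ultimately show "2 * dl m \<le> mixf t l l' j" unfolding mixf_def by (simp add: algebra_simps)
  qed
  moreover have "(\<Sum>j<NN m. mixf t l l' j) = 1"
    using l l' by (simp add: mixf_def sum.distrib sum_distrib_left[symmetric] Lam_def)
  ultimately show ?thesis by (simp add: Lam_def)
qed

lemma ent_gap:
  assumes l: "l \<in> Lam m" and l': "l' \<in> Lam m" and t: "0 \<le> t" "t \<le> 1"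
  shows "ent m (mixf t l l') - t * ent m l - (1-t) * ent m l' \<le> 0"
    and "-1 \<le> ent m (mixf t l l') - t * ent m l - (1-t) * ent m l'"
proof -
  have "ent m (mixf t l l') \<le> (\<Sum>j<NN m. t*(l j * ln (l j)) + (1-t)*(l' j * ln (l' j)))"
    unfolding ent_def mixf_def using Lam_pos[OF l] Lam_pos[OF l'] t
    by (intro sum_mono coord_upper) auto
  also have "\<dots> = t * ent m l + (1-t) * ent m l'"
    by (simp add: ent_def sum.distrib sum_distrib_left)
  finally show "ent m (mixf t l l') - t * ent m l - (1-t) * ent m l' \<le> 0" by simp
  have "(\<Sum>j<NN m. t*(l j * ln (l j)) + (1-t)*(l' j * ln (l' j)) - (1-t)*l j - t*l' j) \<le> ent m (mixf t l l')"
    unfolding ent_def mixf_def using Lam_pos[OF l] Lam_pos[OF l'] t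
    by (intro sum_mono coord_lower) auto
  moreover have "(\<Sum>j<NN m. t*(l j * ln (l j)) + (1-t)*(l' j * ln (l' j)) - (1-t)*l j - t*l' j)
      = t * ent m l + (1-t) * ent m l' - (1-t) * (\<Sum>j<NN m. l j) - t * (\<Sum>j<NN m. l' j)"
    by (simp add: ent_def sum.distrib sum_subtractf sum_distrib_left)
  moreover have "(\<Sum>j<NN m. l j) = 1" "(\<Sum>j<NN m. l' j) = 1" using l l' by (auto simp: Lam_def)
  ultimately show "-1 \<le> ent m (mixf t l l') - t * ent m l - (1-t) * ent m l'" by simp
qed

lemma crs_mix: "crs m (mixf t l l') r = t * crs m l r + (1-t) * crs m l' r"
proof -
  have "crs m (mixf t l l') r = (\<Sum>j<NN m. t * (l j * ln (of_rat (r!j))) + (1-t) * (l' j * ln (of_rat (r!j))))"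
    unfolding crs_def mixf_def by (intro sum.cong) (auto simp: algebra_simps)
  also have "\<dots> = t * crs m l r + (1-t) * crs m l' r"
    unfolding crs_def by (simp add: sum.distrib sum_distrib_left)
  finally show ?thesis .
qed

lemma density:
  assumes l: "l \<in> Lam m" and eta: "0 < eta"
  shows "\<exists>r. valid m r \<and> KL m l r \<le> eta"
proof -
  define e where "e = min (dl m) (eta * dl m)"
  have e: "0 < e" "e \<le> dl m" "e \<le> eta * dl m" using dl_pos[of m] eta by (auto simp: e_def)
  have "\<forall>j. \<exists>q::rat. l j - e < of_rat q \<and> of_rat q < l j"
    using e by (intro allI of_rat_dense) simp
  then obtain q where q: "\<And>j. l j - e < of_rat (q j) \<and> of_rat (q j) < l j" by metis
  define r where "r = map q [0..<NN m]"
  have rj: "\<And>j. j < NN m \<Longrightarrow> r!j = q j" by (simp add: r_def)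
  have lo: "\<And>j. j < NN m \<Longrightarrow> dl m \<le> of_rat (r!j)"
  proof -
    fix j assume j: "j < NN m"
    have "2 * dl m \<le> l j" using l j by (simp add: Lam_def)
    thus "dl m \<le> of_rat (r!j)" using q[of j] e unfolding rj[OF j] by linarith
  qed
  have "(\<Sum>j<NN m. (of_rat (r!j)::real)) \<le> (\<Sum>j<NN m. l j)"
    using q rj by (intro sum_mono) (simp add: less_imp_le)
  hence v: "valid m r" using l lo by (simp add: valid_def r_def Lam_def)
  have "KL m l r = (\<Sum>j<NN m. l j * (ln (l j) - ln (of_rat (r!j))))"
    by (simp add: KL_def ent_def crs_def sum_subtractf[symmetric] algebra_simps)
  also have "\<dots> \<le> (\<Sum>j<NN m. l j * eta)"
  proof (intro sum_mono)
    fix j assume "j \<in> {..<NN m}"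
    hence j: "j < NN m" by simp
    have p: "0 < l j" "0 < (of_rat (r!j)::real)" using Lam_pos[OF l j] valid_pos[OF v j] by auto
    have "ln (l j) - ln (of_rat (r!j)) = ln (l j / of_rat (r!j))" using p by (simp add: ln_div)
    also have "\<dots> \<le> l j / of_rat (r!j) - 1" using p by (intro ln_le_minus_one) simp
    also have "\<dots> = (l j - of_rat (r!j)) / of_rat (r!j)" using p by (simp add: field_simps)
    also have "\<dots> \<le> e / dl m"
    proof (rule frac_le)
      show "0 \<le> e" using e by simp
      show "l j - of_rat (r!j) \<le> e" using q[of j] rj[OF j] by simp
      show "0 < dl m" by (rule dl_pos)
      show "dl m \<le> of_rat (r!j)" by (rule lo[OF j])
    qed
    also have "\<dots> \<le> eta" using e dl_pos[of m] by (simp add: divide_le_eq)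
    finally show "l j * (ln (l j) - ln (of_rat (r!j))) \<le> l j * eta" using p by (intro mult_left_mono) auto
  qed
  also have "\<dots> = eta" using l by (simp add: Lam_def sum_distrib_right[symmetric])
  finally show ?thesis using v by blast
qed


definition base :: "nat \<Rightarrow> nat \<Rightarrow> nat \<Rightarrow> real" where
  "base m k = (\<lambda>j. 2 * dl m + (if j = k then 1 - 2 * real (NN m) * dl m else 0))"

lemma Ndl_le: "1 \<le> m \<Longrightarrow> 2 * real (NN m) * dl m \<le> 1"
proof -
  assume m: "1 \<le> m"
  have "(2::real) \<le> 2^m" using m by (metis power_one_right power_increasing one_le_numeral)
  have "2 * real (NN m) * dl m = 2 / 2^m" using NNdl[of m] by simp
  also have "\<dots> \<le> 1" using \<open>2 \<le> 2^m\<close> by simp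
  finally show ?thesis .
qed

lemma base_Lam: "1 \<le> m \<Longrightarrow> k < NN m \<Longrightarrow> base m k \<in> Lam m"
  using Ndl_le[of m] by (simp add: Lam_def base_def sum.distrib)

lemma base_colsum: "j < NN m \<Longrightarrow> (\<Sum>k<NN m. base m k j) = 1"
  by (simp add: base_def sum.distrib)

lemma ent_base:
  assumes m: "1 \<le> m" and k: "k < NN m"
  shows "- 2 * real (NN m) * dl m * (1 + LL m) \<le> ent m (base m k)"
proof -
  have fin: "finite {..<NN m}" and kin: "k \<in> {..<NN m}" using k by auto
  have "ent m (base m k) = base m k k * ln (base m k k) + (\<Sum>j\<in>{..<NN m} - {k}. base m k j * ln (base m k j))"
    unfolding ent_def by (rule sum.remove[OF fin kin])
  moreover have "base m k k - 1 \<le> base m k k * ln (base m k k)"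
    using Ndl_le[OF m] dl_pos[of m] by (intro xlnx_ge) (simp add: base_def)
  moreover have "base m k k - 1 \<ge> - 2 * real (NN m) * dl m"
    using dl_pos[of m] by (simp add: base_def)
  moreover have "(\<Sum>j\<in>{..<NN m} - {k}. base m k j * ln (base m k j)) \<ge> (\<Sum>j\<in>{..<NN m} - {k}. - 2 * dl m * LL m)"
  proof (intro sum_mono)
    fix j assume "j \<in> {..<NN m} - {k}"
    hence jk: "j \<noteq> k" by simp
    have "ln (dl m) \<le> ln (2 * dl m)" using dl_pos[of m] by (intro ln_mono) auto
    hence "2 * dl m * (- LL m) \<le> 2 * dl m * ln (2 * dl m)" using LL_ln[of m] dl_pos[of m]
      by (intro mult_left_mono) auto
    thus "- 2 * dl m * LL m \<le> base m k j * ln (base m k j)" using jk by (simp add: base_def)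
  qed
  moreover have "(\<Sum>j\<in>{..<NN m} - {k}. - 2 * dl m * LL m) \<ge> - 2 * real (NN m) * dl m * LL m"
  proof -
    have c: "card ({..<NN m} - {k}) \<le> NN m" by (simp add: card_Diff_singleton_if)
    have "0 \<le> 2 * dl m * LL m" using dl_pos[of m] LL_pos[OF m] by simp
    hence "real (card ({..<NN m} - {k})) * (2 * dl m * LL m) \<le> real (NN m) * (2 * dl m * LL m)"
      using c by (intro mult_right_mono) auto
    thus ?thesis by (simp add: algebra_simps)
  qed
  ultimately show ?thesis by (simp add: algebra_simps)
qed

lemma sum_ln_le:
  assumes r: "valid m r"
  shows "(\<Sum>j<NN m. ln (of_rat (r!j))) \<le> - real (NN m) * ln (real (NN m))"
proof -
  have N: "0 < real (NN m)" using NN_pos[of m] by simp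
  have "(\<Sum>j<NN m. ln (real (NN m)) + ln (of_rat (r!j))) \<le> (\<Sum>j<NN m. real (NN m) * of_rat (r!j) - 1)"
  proof (intro sum_mono)
    fix j assume "j \<in> {..<NN m}"
    hence p: "0 < (of_rat (r!j)::real)" using valid_pos[OF r] by simp
    have "ln (real (NN m)) + ln (of_rat (r!j)) = ln (real (NN m) * of_rat (r!j))" using N p by (simp add: ln_mult)
    also have "\<dots> \<le> real (NN m) * of_rat (r!j) - 1" using N p by (intro ln_le_minus_one) simp
    finally show "ln (real (NN m)) + ln (of_rat (r!j)) \<le> real (NN m) * of_rat (r!j) - 1" .
  qed
  moreover have "(\<Sum>j<NN m. real (NN m) * of_rat (r!j) - 1) \<le> 0"
    using r N by (simp add: sum_subtractf sum_distrib_left[symmetric] valid_def mult_le_cancel_left1)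
  ultimately show ?thesis by (simp add: sum.distrib)
qed

lemma avg_KL:
  assumes m: "1 \<le> m" and r: "valid m r"
  shows "real (NN m) * (ln (real (NN m)) - 2 * real (NN m) * dl m * (1 + LL m)) \<le> (\<Sum>k<NN m. KL m (base m k) r)"
proof -
  have "(\<Sum>k<NN m. crs m (base m k) r) = (\<Sum>j<NN m. \<Sum>k<NN m. base m k j * ln (of_rat (r!j)))"
    unfolding crs_def by (rule sum.swap)
  also have "\<dots> = (\<Sum>j<NN m. ln (of_rat (r!j)))"
    by (intro sum.cong refl) (simp add: sum_distrib_right[symmetric] base_colsum)
  finally have 1: "(\<Sum>k<NN m. crs m (base m k) r) \<le> - real (NN m) * ln (real (NN m))"
    using sum_ln_le[OF r] by simp
  have 2: "(\<Sum>k<NN m. - 2 * real (NN m) * dl m * (1 + LL m)) \<le> (\<Sum>k<NN m. ent m (base m k))"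
    using ent_base[OF m] by (intro sum_mono) simp
  show ?thesis using 1 2 by (simp add: KL_def sum_subtractf algebra_simps)
qed


lemma LL_ge_m: "1 \<le> m \<Longrightarrow> real m \<le> LL m"
proof -
  assume m: "1 \<le> m"
  have "real m * 2 \<le> real (m*m+m)" using m by simp
  hence "real m * 2 * (1/2) \<le> real (m*m+m) * ln 2" using ln2_ge by (intro mult_mono) auto
  thus ?thesis by (simp add: LL_def)
qed

lemma kap_pos: "1 \<le> m \<Longrightarrow> 0 < kap m"
  using LL_pos[of m] by (simp add: kap_def)

lemma kap_le: "1 \<le> m \<Longrightarrow> kap m \<le> 2 / real m"
  using LL_ge_m[of m] by (simp add: kap_def frac_le)

lemma val_bound:
  assumes m: "1 \<le> m"
  shows "2 - 10 / (real m + 1) \<le> kap m * (ln (real (NN m)) - 2 * real (NN m) * dl m * (1 + LL m))"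
proof -
  have L: "1 \<le> LL m" by (rule LL_pos[OF m])
  have lnN: "ln (real (NN m)) = real (m*m) * ln 2" by (simp add: NN_def ln_realpow)
  have l2: "0 < ln (2::real)" by simp
  have mp: "0 < real m" using m by simp
  have "kap m * ln (real (NN m)) = 2 * (real m * real m * ln 2) / ((real m * real m + real m) * ln 2)"
    by (simp add: kap_def LL_def lnN)
  also have "\<dots> = (2 * (real m * real m) * ln 2) / ((real m * real m + real m) * ln 2)"
    by (simp add: algebra_simps)
  also have "\<dots> = 2 * (real m * real m) / (real m * real m + real m)"
    using l2 by (intro mult_divide_mult_cancel_right) simp
  also have "\<dots> = (2 * real m * real m) / ((real m + 1) * real m)"
    by (simp add: algebra_simps)
  also have "\<dots> = 2 * real m / (real m + 1)"
    using mp by (intro mult_divide_mult_cancel_right) simp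
  finally have 1: "kap m * ln (real (NN m)) = 2 * real m / (real m + 1)" .
  have "kap m * (2 * real (NN m) * dl m * (1 + LL m)) = (2 / LL m) * (2 * (real (NN m) * dl m) * (1 + LL m))"
    by (simp add: kap_def mult.assoc)
  also have "\<dots> = (2 / LL m) * (2 * (1 / 2^m) * (1 + LL m))" by (simp only: NNdl)
  also have "\<dots> = 4 / 2^m * (1 / LL m + 1)" using L by (simp add: field_simps)
  finally have 2: "kap m * (2 * real (NN m) * dl m * (1 + LL m)) = 4 / 2^m * (1 / LL m + 1)" .
  have "1 / LL m \<le> 1" using L by simp
  hence "4 / 2^m * (1 / LL m + 1) \<le> 4 / 2^m * 2" by (intro mult_left_mono) auto
  also have "\<dots> \<le> 8 / (real m + 1)"
  proof -
    have "real m + 1 \<le> 2^m" by (induction m) auto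
    thus ?thesis by (simp add: frac_le)
  qed
  finally have 3: "kap m * (2 * real (NN m) * dl m * (1 + LL m)) \<le> 8 / (real m + 1)" using 2 by simp
  have 4: "2 * real m / (real m + 1) = 2 - 2 / (real m + 1)" by (simp add: field_simps)
  show ?thesis using 1 3 4 by (simp add: right_diff_distrib add_divide_distrib[symmetric]) 
qed


definition cf :: "nat \<Rightarrow> (nat \<Rightarrow> nat \<Rightarrow> real) \<Rightarrow> nat \<times> rat list \<Rightarrow> real" where
  "cf m0 M p = (if valid (fst p + m0) (snd p)
      then -1 + kap (fst p + m0) * KL (fst p + m0) (M (fst p)) (snd p) else 0)"

definition Fam :: "nat \<Rightarrow> (nat \<Rightarrow> nat \<Rightarrow> real) set" where
  "Fam m0 = {M. \<forall>n. M n \<in> Lam (n + m0)}"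

definition vvec :: "nat \<Rightarrow> (nat \<Rightarrow> nat \<Rightarrow> real) \<Rightarrow> (nat \<Rightarrow>\<^sub>C real)" where
  "vvec m0 M = Bcontfun (\<lambda>i. cf m0 M (from_nat i))"

lemma cf_bound:
  assumes m0: "1 \<le> m0" and M: "M \<in> Fam m0"
  shows "\<bar>cf m0 M p\<bar> \<le> 1"
proof (cases "valid (fst p + m0) (snd p)")
  case True
  let ?m = "fst p + m0"
  have l: "M (fst p) \<in> Lam ?m" using M by (simp add: Fam_def)
  have k0: "0 \<le> KL ?m (M (fst p)) (snd p)" by (rule KL_nonneg[OF l True])
  have k1: "KL ?m (M (fst p)) (snd p) \<le> LL ?m" by (rule KL_le[OF l True])
  have L: "1 \<le> LL ?m" using m0 by (intro LL_pos) simp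
  have "kap ?m * KL ?m (M (fst p)) (snd p) \<le> kap ?m * LL ?m"
    using k1 kap_pos[of ?m] m0 by (intro mult_left_mono) auto
  also have "\<dots> = 2" using L by (simp add: kap_def)
  finally have "kap ?m * KL ?m (M (fst p)) (snd p) \<le> 2" .
  moreover have "0 \<le> kap ?m * KL ?m (M (fst p)) (snd p)" using k0 kap_pos[of ?m] m0 by simp
  ultimately show ?thesis using True by (simp add: cf_def)
qed (simp add: cf_def)

lemma vec_mem: "1 \<le> m0 \<Longrightarrow> M \<in> Fam m0 \<Longrightarrow> (\<lambda>i. cf m0 M (from_nat i)) \<in> bcontfun"
  by (rule bcontfun_normI[where b=1]) (auto simp: cf_bound)

lemma vec_apply: "1 \<le> m0 \<Longrightarrow> M \<in> Fam m0 \<Longrightarrow> apply_bcontfun (vvec m0 M) i = cf m0 M (from_nat i)"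
  unfolding vvec_def by (simp add: Bcontfun_inverse vec_mem)

lemma vec_norm: "1 \<le> m0 \<Longrightarrow> M \<in> Fam m0 \<Longrightarrow> norm (vvec m0 M) \<le> 1"
  by (rule norm_bound) (simp add: vec_apply cf_bound)

lemma apply_sum: "apply_bcontfun (sum f K) x = (\<Sum>k\<in>K. apply_bcontfun (f k) x)"
  by (induction K rule: infinite_finite_induct) auto


lemma kap_mono: "1 \<le> m \<Longrightarrow> m \<le> m' \<Longrightarrow> kap m' \<le> kap m"
proof -
  assume m: "1 \<le> m" and mm: "m \<le> m'"
  have "real (m*m+m) \<le> real (m'*m'+m')" using mm by (simp add: add_mono mult_mono)
  hence "LL m \<le> LL m'" unfolding LL_def by (intro mult_right_mono) auto
  thus ?thesis using LL_pos[OF m] by (simp add: kap_def frac_le)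
qed

lemma mix_close:
  assumes m0: "1 \<le> m0" and M: "M \<in> Fam m0" and M': "M' \<in> Fam m0" and t: "0 \<le> t" "t \<le> 1"
  shows "(\<lambda>n. mixf t (M n) (M' n)) \<in> Fam m0"
    and "norm (t *\<^sub>R vvec m0 M + (1-t) *\<^sub>R vvec m0 M' - vvec m0 (\<lambda>n. mixf t (M n) (M' n))) \<le> kap m0"
proof -
  define V where "V = (\<lambda>n. mixf t (M n) (M' n))"
  show V: "(\<lambda>n. mixf t (M n) (M' n)) \<in> Fam m0"
    using M M' t by (auto simp: Fam_def intro: mix_Lam)
  show "norm (t *\<^sub>R vvec m0 M + (1-t) *\<^sub>R vvec m0 M' - vvec m0 (\<lambda>n. mixf t (M n) (M' n))) \<le> kap m0"
  proof (rule norm_bound)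
    fix i
    define p where "p = (from_nat i :: nat \<times> rat list)"
    let ?m = "fst p + m0"
    have "\<bar>t * cf m0 M p + (1-t) * cf m0 M' p - cf m0 V p\<bar> \<le> kap m0"
    proof (cases "valid ?m (snd p)")
      case True
      have l: "M (fst p) \<in> Lam ?m" and l': "M' (fst p) \<in> Lam ?m" using M M' by (auto simp: Fam_def)
      have e: "t * cf m0 M p + (1-t) * cf m0 M' p - cf m0 V p
          = kap ?m * (t * ent ?m (M (fst p)) + (1-t) * ent ?m (M' (fst p)) - ent ?m (mixf t (M (fst p)) (M' (fst p))))"
        using True by (simp add: cf_def V_def KL_def crs_mix algebra_simps)
      have g1: "0 \<le> t * ent ?m (M (fst p)) + (1-t) * ent ?m (M' (fst p)) - ent ?m (mixf t (M (fst p)) (M' (fst p)))"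
        using ent_gap(1)[OF l l' t] by simp
      have g2: "t * ent ?m (M (fst p)) + (1-t) * ent ?m (M' (fst p)) - ent ?m (mixf t (M (fst p)) (M' (fst p))) \<le> 1"
        using ent_gap(2)[OF l l' t] by simp
      have kp: "0 < kap ?m" using m0 by (intro kap_pos) simp
      have km: "kap ?m \<le> kap m0" using m0 by (intro kap_mono) auto
      have "kap ?m * (t * ent ?m (M (fst p)) + (1-t) * ent ?m (M' (fst p)) - ent ?m (mixf t (M (fst p)) (M' (fst p)))) \<le> kap ?m * 1"
        using g2 kp by (intro mult_left_mono) auto
      moreover have "0 \<le> kap ?m * (t * ent ?m (M (fst p)) + (1-t) * ent ?m (M' (fst p)) - ent ?m (mixf t (M (fst p)) (M' (fst p))))"
        using g1 kp by simp
      ultimately show ?thesis using e km by simp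
    qed (simp add: cf_def kap_pos[OF m0] less_imp_le)
    thus "norm (apply_bcontfun (t *\<^sub>R vvec m0 M + (1-t) *\<^sub>R vvec m0 M' - vvec m0 (\<lambda>n. mixf t (M n) (M' n))) i) \<le> kap m0"
      using V m0 M M' by (simp add: vec_apply p_def V_def)
  qed
qed


definition PP :: "nat \<Rightarrow> nat \<Rightarrow> nat \<Rightarrow> nat \<Rightarrow> nat \<Rightarrow> real" where
  "PP m0 n k = (\<lambda>n'. if n' = n then base (n+m0) k else base (n'+m0) 0)"

definition bb :: "nat \<Rightarrow> nat \<Rightarrow> (nat \<Rightarrow>\<^sub>C real)" where
  "bb m0 n = (\<Sum>k<NN (n+m0). (1 / real (NN (n+m0))) *\<^sub>R vvec m0 (PP m0 n k))"

lemma PP_Fam: "1 \<le> m0 \<Longrightarrow> k < NN (n+m0) \<Longrightarrow> PP m0 n k \<in> Fam m0"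
  by (auto simp: Fam_def PP_def intro!: base_Lam NN_pos)

lemma bb_far:
  assumes m0: "1 \<le> m0" and M: "M \<in> Fam m0"
  shows "2 - 10 / (real (n+m0) + 1) \<le> dist (bb m0 n) (vvec m0 M)"
proof -
  let ?m = "n + m0"
  let ?N = "real (NN ?m)"
  define V where "V = ln ?N - 2 * ?N * dl ?m * (1 + LL ?m)"
  have m: "1 \<le> ?m" using m0 by simp
  have kp: "0 < kap ?m" by (rule kap_pos[OF m])
  have Np: "0 < ?N" using NN_pos[of ?m] by simp
  have l: "M n \<in> Lam ?m" using M by (simp add: Fam_def)
  have main: "kap ?m * V \<le> dist (bb m0 n) (vvec m0 M) + e" if e: "0 < e" for e
  proof -
    obtain r where r: "valid ?m r" and kl: "KL ?m (M n) r \<le> e / kap ?m"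
      using density[OF l, of "e / kap ?m"] e kp by auto
    define i where "i = to_nat (n, r)"
    have fi: "from_nat i = (n, r)" by (simp add: i_def)
    have "apply_bcontfun (bb m0 n) i = (\<Sum>k<NN ?m. (1 / ?N) * (-1 + kap ?m * KL ?m (base ?m k) r))"
      unfolding bb_def apply_sum
      using PP_Fam[OF m0] m0 r by (intro sum.cong refl) (simp add: vec_apply fi cf_def PP_def)
    also have "\<dots> = (\<Sum>k<NN ?m. - (1 / ?N)) + (\<Sum>k<NN ?m. kap ?m * ((1 / ?N) * KL ?m (base ?m k) r))"
      by (subst sum.distrib[symmetric]) (intro sum.cong refl, simp add: algebra_simps)
    also have "\<dots> = -1 + kap ?m * ((1 / ?N) * (\<Sum>k<NN ?m. KL ?m (base ?m k) r))"
      using Np by (simp add: sum_distrib_left[symmetric] sum_divide_distrib[symmetric])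
    finally have bi: "apply_bcontfun (bb m0 n) i = -1 + kap ?m * ((1 / ?N) * (\<Sum>k<NN ?m. KL ?m (base ?m k) r))" .
    have vi: "apply_bcontfun (vvec m0 M) i = -1 + kap ?m * KL ?m (M n) r"
      using m0 M r by (simp add: vec_apply fi cf_def)
    have avg: "V \<le> (1 / ?N) * (\<Sum>k<NN ?m. KL ?m (base ?m k) r)"
      using avg_KL[OF m r] Np unfolding V_def by (simp add: field_simps)
    have "kap ?m * V - e \<le> kap ?m * ((1 / ?N) * (\<Sum>k<NN ?m. KL ?m (base ?m k) r)) - kap ?m * KL ?m (M n) r"
    proof -
      have "kap ?m * V \<le> kap ?m * ((1 / ?N) * (\<Sum>k<NN ?m. KL ?m (base ?m k) r))"
        using avg kp by (intro mult_left_mono) auto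
      moreover have "kap ?m * KL ?m (M n) r \<le> e"
        using kl kp by (simp add: field_simps)
      ultimately show ?thesis by simp
    qed
    also have "\<dots> = apply_bcontfun (bb m0 n - vvec m0 M) i" using bi vi by simp
    also have "\<dots> \<le> norm (bb m0 n - vvec m0 M)"
      using norm_bounded[of "bb m0 n - vvec m0 M" i] by simp
    finally show ?thesis by (simp add: dist_norm)
  qed
  have "kap ?m * V \<le> dist (bb m0 n) (vvec m0 M)" by (rule field_le_epsilon) (rule main)
  moreover have "2 - 10 / (real ?m + 1) \<le> kap ?m * V" unfolding V_def by (rule val_bound[OF m])
  ultimately show ?thesis by simp
qed


theorem theorem7p10:
  shows "\<exists>Y :: (nat \<Rightarrow>\<^sub>C real) set. subspace Y \<and> closed Y \<and>
     (\<forall>eps>0. \<exists>A. A \<subseteq> Y \<inter> cball 0 1 \<and> eps_convex eps A \<and>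
        hausdorff_dist A (convex hull A) = 2)"
proof (rule exI[of _ UNIV], intro conjI allI impI)
  show "subspace (UNIV :: (nat \<Rightarrow>\<^sub>C real) set)" by (rule subspace_UNIV)
  show "closed (UNIV :: (nat \<Rightarrow>\<^sub>C real) set)" by simp
  fix eps :: real assume eps: "0 < eps"
  obtain k :: nat where k: "2 / eps < real k" using reals_Archimedean2 by blast
  define m0 where "m0 = k + 1"
  have m0: "1 \<le> m0" by (simp add: m0_def)
  have "2 / eps < real m0" using k by (simp add: m0_def)
  hence "2 < real m0 * eps" using eps by (simp add: divide_less_eq mult.commute)
  hence "2 / real m0 \<le> eps" using m0 by (simp add: divide_le_eq mult.commute)
  hence km0: "kap m0 \<le> eps" using kap_le[OF m0] by linarith
  define A where "A = vvec m0 ` Fam m0"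
  have Acb: "A \<subseteq> cball 0 1" using vec_norm[OF m0] by (auto simp: A_def)
  have Ane: "A \<noteq> {}" using PP_Fam[OF m0, of 0 0] NN_pos[of m0] by (auto simp: A_def)
  have coA: "convex hull A \<subseteq> cball 0 1" using Acb by (intro hull_minimal) (auto simp: convex_cball)
  show "\<exists>A. A \<subseteq> (UNIV :: (nat \<Rightarrow>\<^sub>C real) set) \<inter> cball 0 1 \<and> eps_convex eps A \<and> hausdorff_dist A (convex hull A) = 2"
  proof (rule exI[where x=A], intro conjI)
    show "A \<subseteq> UNIV \<inter> cball 0 1" using Acb by simp
    show "eps_convex eps A" unfolding eps_convex_def
    proof (intro ballI)
      fix a b t assume a: "a \<in> A" and b: "b \<in> A" and t: "t \<in> {0..1::real}"
      obtain M where M: "M \<in> Fam m0" and aM: "a = vvec m0 M" using a by (auto simp: A_def)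
      obtain M' where M': "M' \<in> Fam m0" and bM: "b = vvec m0 M'" using b by (auto simp: A_def)
      have t01: "0 \<le> t" "t \<le> 1" using t by auto
      have V: "vvec m0 (\<lambda>n. mixf t (M n) (M' n)) \<in> A" using mix_close(1)[OF m0 M M' t01] by (simp add: A_def)
      have "dist (t *\<^sub>R a + (1 - t) *\<^sub>R b) (vvec m0 (\<lambda>n. mixf t (M n) (M' n))) \<le> eps"
        using mix_close(2)[OF m0 M M' t01] km0 by (simp add: aM bM dist_norm)
      thus "infdist (t *\<^sub>R a + (1 - t) *\<^sub>R b) A \<le> eps" by (rule infdist_le2[OF V])
    qed
    have S1: "(SUP a\<in>A. ereal (infdist a (convex hull A))) = 0"
    proof -
      have "(SUP a\<in>A. ereal (infdist a (convex hull A))) = (SUP a\<in>A. (0::ereal))"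
        by (intro SUP_cong refl) (simp add: hull_inc)
      thus ?thesis using Ane by simp
    qed
    have S2: "(SUP c\<in>convex hull A. ereal (infdist c A)) = 2"
    proof (rule antisym)
      show "(SUP c\<in>convex hull A. ereal (infdist c A)) \<le> 2"
      proof (rule SUP_least)
        fix c assume c: "c \<in> convex hull A"
        obtain a0 where a0: "a0 \<in> A" using Ane by auto
        have "infdist c A \<le> dist c a0" by (rule infdist_le[OF a0])
        also have "\<dots> \<le> norm c + norm a0" by (simp add: dist_norm norm_triangle_ineq4)
        also have "\<dots> \<le> 2"
        proof -
          have "norm c \<le> 1" "norm a0 \<le> 1" using coA c Acb a0 by (auto simp: subset_iff dist_norm)
          thus ?thesis by simp
        qed
        finally show "ereal (infdist c A) \<le> 2" by simp
      qed
      show "2 \<le> (SUP c\<in>convex hull A. ereal (infdist c A))"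
        unfolding le_SUP_iff
      proof (intro allI impI)
        fix y :: ereal assume y: "y < 2"
        obtain r where yr: "y < ereal r" and r2: "ereal r < 2" using ereal_dense2[OF y] by blast
        have r2': "r < 2" using r2 by simp
        obtain n :: nat where n: "10 / (2 - r) < real n" using reals_Archimedean2 by blast
        have "10 < (2 - r) * real n" using n r2' by (simp add: divide_less_eq mult.commute)
        hence "10 < (2 - r) * (real (n + m0) + 1)"
          using r2' by (smt (verit) mult_left_mono of_nat_add of_nat_0_le_iff)
        hence lt: "r < 2 - 10 / (real (n + m0) + 1)" by (simp add: field_simps)
        have bin: "bb m0 n \<in> convex hull A"
          unfolding bb_def
        proof (rule convex_sum)
          show "finite {..<NN (n + m0)}" by simp
          show "convex (convex hull A)" by simp
          show "(\<Sum>i<NN (n + m0). 1 / real (NN (n + m0))) = 1" using NN_pos[of "n+m0"] by simp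
          show "\<And>i. i \<in> {..<NN (n + m0)} \<Longrightarrow> 0 \<le> 1 / real (NN (n + m0))" by simp
          show "\<And>i. i \<in> {..<NN (n + m0)} \<Longrightarrow> vvec m0 (PP m0 n i) \<in> convex hull A"
            using PP_Fam[OF m0] by (auto simp: A_def intro!: hull_inc)
        qed
        have "2 - 10 / (real (n + m0) + 1) \<le> infdist (bb m0 n) A"
          unfolding infdist_notempty[OF Ane]
          by (rule cINF_greatest[OF Ane]) (unfold A_def, use bb_far[OF m0] in blast)
        hence "r < infdist (bb m0 n) A" using lt by linarith
        hence "ereal r < ereal (infdist (bb m0 n) A)" by simp
        hence "y < ereal (infdist (bb m0 n) A)" using yr by (rule order.strict_trans[rotated])
        thus "\<exists>i\<in>convex hull A. y < ereal (infdist i A)" using bin by blast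
      qed
    qed
    show "hausdorff_dist A (convex hull A) = 2"
      unfolding hausdorff_dist_def S1 S2 by simp
  qed
qed

end
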